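(* Let $\mathcal{E}^\infty$ denote the infinite prolongation of Pleba\'nski's second heavenly equation $$u_{xz}=u_{ty}+u_{yy}\,u_{zz}-u_{yz}^2$$ for a function $u(t,x,y,z)$, and let $\bar D_t,\bar D_x,\bar D_y,\bar D_z$ be the restrictions of the total derivatives $D_t,D_x,D_y,D_z$ to $\mathcal{E}^\infty$. On $\mathcal{E}^\infty\times\mathbb{R}^\infty$, with additional fibre coordinates $v_{i,j}$, $i,j\ge 0$ (where $v_{0,0}=v$, $v_{i,j}$ corresponds to $\partial^{i+j}v/\partial y^i\partial z^j$), define $$\widetilde D_y=\bar D_y+\sum_{i,j\ge0}v_{i+1,j}\frac{\partial}{\partial v_{i,j}},\qquad \widetilde D_z=\bar D_z+\sum_{i,j\ge0}v_{i,j+1}\frac{\partial}{\partial v_{i,j}},$$ $$\widetilde D_t=\bar D_t+\sum_{i,j\ge0}\widetilde D_y^{\,i}\widetilde D_z^{\,j}\big((u_{yz}+v_{0,0})\,v_{0,1}-u_{zz}\,v_{1,0}\big)\frac{\partial}{\partial v_{i,j}},$$ $$\widetilde D_x=\bar D_x+\sum_{i,j\ge0}\widetilde D_y^{\,i}\widetilde D_z^{\,j}\big(u_{yy}\,v_{0,1}-(u_{yz}-v_{0,0})\,v_{1,0}\big)\frac{\partial}{\partial v_{i,j}}.$$ Then the four vector fields $\widetilde D_t,\widetilde D_x,\widetilde D_y,\widetilde D_z$ pairwise commute; that is, the system $$v_t=(u_{yz}+v)\,v_z-u_{zz}\,v_y,\qquad v_x=u_{yy}\,v_z-(u_{yz}-v)\,v_y$$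 defines a differential covering (zero-curvature representation) of the second heavenly equation.
   Context: A differential covering of a PDE $\mathcal{E}$ with infinite prolongation $\mathcal{E}^\infty$ is given by extending the restricted total derivative operators $\bar D_t,\bar D_x,\bar D_y,\bar D_z$ to vector fields $\widetilde D_t,\widetilde D_x,\widetilde D_y,\widetilde D_z$ on $\mathcal{E}^\infty\times\mathbb{R}^\infty$ (new fibre coordinates) that project to the $\bar D$'s and commute pairwise; equivalently, the system of equations for the new dependent variable is compatible modulo $\mathcal{E}$ and its differential consequences. Here $u_{yz}$, $u_{yy}$, $u_{zz}$ denote the corresponding jet coordinates of second derivatives of $u$. *)

theory Defs
  imports "HOL-Analysis.Analysis"
begin

datatype var = Vt | Vx | Vy | Vz

text \<open>Coordinates on J^infinity x R^infinity: independent variables, jet coordinates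
  u_sigma (sigma a multi-index counting derivatives in t,x,y,z), and the new fibre
  coordinates v_{i,j}.\<close>
datatype coord = Base var | U "var \<Rightarrow> nat" | V nat nat

type_synonym pt = "coord \<Rightarrow> real"
type_synonym fn = "pt \<Rightarrow> real"
type_synonym vfield = "coord \<Rightarrow> fn"

definition mi :: "nat \<Rightarrow> nat \<Rightarrow> nat \<Rightarrow> nat \<Rightarrow> var \<Rightarrow> nat" where
  "mi a b c d = (\<lambda>w. case w of Vt \<Rightarrow> a | Vx \<Rightarrow> b | Vy \<Rightarrow> c | Vz \<Rightarrow> d)"

definition shift :: "var \<Rightarrow> (var \<Rightarrow> nat) \<Rightarrow> (var \<Rightarrow> nat)" where
  "shift a \<sigma> = \<sigma>(a := Suc (\<sigma> a))"

definition dep :: "fn \<Rightarrow> coord set" where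
  "dep G = {c. \<exists>p s. G (p(c := s)) \<noteq> G p}"

definition pd :: "coord \<Rightarrow> fn \<Rightarrow> fn" where
  "pd c G p = deriv (\<lambda>s. G (p(c := s))) (p c)"

text \<open>Action of a vector field sum_c X^c d/dc on a function depending on finitely many coordinates.\<close>
definition apply_vf :: "vfield \<Rightarrow> fn \<Rightarrow> fn" where
  "apply_vf X G p = (\<Sum>c\<in>dep G. X c p * pd c G p)"

definition lie_bracket :: "vfield \<Rightarrow> vfield \<Rightarrow> vfield" where
  "lie_bracket X Y c = (\<lambda>p. apply_vf X (Y c) p - apply_vf Y (X c) p)"

definition totD :: "var \<Rightarrow> vfield" where
  "totD a c = (case c of
      Base b \<Rightarrow> (\<lambda>p. if b = a then 1 else 0)
    | U \<sigma> \<Rightarrow> (\<lambda>p. p (U (shift a \<sigma>)))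
    | V i j \<Rightarrow> (\<lambda>p. 0))"

definition Dsig :: "(var \<Rightarrow> nat) \<Rightarrow> fn \<Rightarrow> fn" where
  "Dsig \<sigma> G = (apply_vf (totD Vt) ^^ \<sigma> Vt) ((apply_vf (totD Vx) ^^ \<sigma> Vx)
      ((apply_vf (totD Vy) ^^ \<sigma> Vy) ((apply_vf (totD Vz) ^^ \<sigma> Vz) G)))"

definition heavenly :: fn where
  "heavenly p = p (U (mi 0 1 0 1)) - p (U (mi 1 0 1 0))
      - p (U (mi 0 0 2 0)) * p (U (mi 0 0 0 2)) + (p (U (mi 0 0 1 1)))\<^sup>2"

text \<open>Infinite prolongation (times R^infinity, the v-coordinates being unconstrained).\<close>
definition Einf :: "pt set" where
  "Einf = {p. \<forall>\<sigma>. Dsig \<sigma> heavenly p = 0}"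

definition tDy :: vfield where
  "tDy c = (case c of V i j \<Rightarrow> (\<lambda>p. p (V (Suc i) j)) | _ \<Rightarrow> totD Vy c)"

definition tDz :: vfield where
  "tDz c = (case c of V i j \<Rightarrow> (\<lambda>p. p (V i (Suc j))) | _ \<Rightarrow> totD Vz c)"

definition Tgen :: fn where
  "Tgen p = (p (U (mi 0 0 1 1)) + p (V 0 0)) * p (V 0 1) - p (U (mi 0 0 0 2)) * p (V 1 0)"

definition Xgen :: fn where
  "Xgen p = p (U (mi 0 0 2 0)) * p (V 0 1) - (p (U (mi 0 0 1 1)) - p (V 0 0)) * p (V 1 0)"

definition tDgen :: "fn \<Rightarrow> var \<Rightarrow> vfield" where
  "tDgen R a c = (case c of
      V i j \<Rightarrow> (apply_vf tDy ^^ i) ((apply_vf tDz ^^ j) R)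
    | _ \<Rightarrow> totD a c)"

definition tD :: "var \<Rightarrow> vfield" where
  "tD a = (case a of Vt \<Rightarrow> tDgen Tgen Vt | Vx \<Rightarrow> tDgen Xgen Vx | Vy \<Rightarrow> tDy | Vz \<Rightarrow> tDz)"

end

theory Submission
  imports Defs
begin


inductive poly_on :: "coord set \<Rightarrow> fn \<Rightarrow> bool" for C where
  pconst: "poly_on C (\<lambda>p. k)"
| pproj: "c \<in> C \<Longrightarrow> poly_on C (\<lambda>p. p c)"
| padd: "poly_on C G \<Longrightarrow> poly_on C H \<Longrightarrow> poly_on C (\<lambda>p. G p + H p)"
| pdiff: "poly_on C G \<Longrightarrow> poly_on C H \<Longrightarrow> poly_on C (\<lambda>p. G p - H p)"
| pmult: "poly_on C G \<Longrightarrow> poly_on C H \<Longrightarrow> poly_on C (\<lambda>p. G p * H p)"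

abbreviation poly :: "fn \<Rightarrow> bool" where "poly \<equiv> poly_on UNIV"

lemma poly_on_UNIV: "poly_on C G \<Longrightarrow> poly G"
  by (induction rule: poly_on.induct) (auto intro: poly_on.intros)

definition supp :: "coord set \<Rightarrow> fn \<Rightarrow> bool" where
  "supp S G \<longleftrightarrow> finite S \<and> (\<forall>p q. (\<forall>c\<in>S. p c = q c) \<longrightarrow> G p = G q)"

lemma supp_mono: "supp S G \<Longrightarrow> finite T \<Longrightarrow> S \<subseteq> T \<Longrightarrow> supp T G"
  unfolding supp_def by blast

lemma supp_bin: "supp S1 G \<Longrightarrow> supp S2 H \<Longrightarrow> supp (S1 \<union> S2) (\<lambda>p. f (G p) (H p))"
proof -
  assume a: "supp S1 G" "supp S2 H"
  show ?thesis unfolding supp_def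
  proof (intro conjI allI impI)
    show "finite (S1 \<union> S2)" using a by (simp add: supp_def)
    fix p q :: pt assume "\<forall>c\<in>S1 \<union> S2. p c = q c"
    then have "G p = G q" "H p = H q" using a unfolding supp_def by auto
    then show "f (G p) (H p) = f (G q) (H q)" by simp
  qed
qed

lemma poly_supp: "poly_on C G \<Longrightarrow> \<exists>S. supp S G"
proof (induction rule: poly_on.induct)
  case (pconst k) show ?case by (rule exI[of _ "{}"]) (simp add: supp_def)
next
  case (pproj c) show ?case by (rule exI[of _ "{c}"]) (simp add: supp_def)
next
  case (padd G H) then show ?case using supp_bin[of _ G _ H "(+)"] by blast
next
  case (pdiff G H) then show ?case using supp_bin[of _ G _ H "(-)"] by blast
next
  case (pmult G H) then show ?case using supp_bin[of _ G _ H "(*)"] by blast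
qed

lemma pd_notdep: "c \<notin> dep G \<Longrightarrow> pd c G p = 0"
proof -
  assume "c \<notin> dep G"
  then have "(\<lambda>s. G (p(c := s))) = (\<lambda>s. G p)" by (auto simp: dep_def)
  then show ?thesis by (simp add: pd_def)
qed

lemma dep_sub: "supp S G \<Longrightarrow> dep G \<subseteq> S"
proof
  fix c assume s: "supp S G" and c: "c \<in> dep G"
  then obtain p s' where ne: "G (p(c := s')) \<noteq> G p" by (auto simp: dep_def)
  show "c \<in> S"
  proof (rule ccontr)
    assume "c \<notin> S"
    then have "\<forall>c'\<in>S. (p(c := s')) c' = p c'" by auto
    with s have "G (p(c := s')) = G p" unfolding supp_def by blast
    with ne show False by simp
  qed
qed

lemma av_sum: "supp S G \<Longrightarrow> apply_vf X G p = (\<Sum>c\<in>S. X c p * pd c G p)"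
  unfolding apply_vf_def
  apply (rule sum.mono_neutral_left)
  using dep_sub[of S G] by (auto simp: supp_def pd_notdep)

lemma pd_eq: "((\<lambda>s. G (p(c := s))) has_real_derivative d) (at (p c)) \<Longrightarrow> pd c G p = d"
  by (simp add: pd_def DERIV_imp_deriv)

lemma poly_hasd: "poly_on C G \<Longrightarrow> ((\<lambda>s. G (p(c := s))) has_real_derivative pd c G p) (at (p c))"
proof (induction rule: poly_on.induct)
  case (pconst k)
  have "pd c (\<lambda>p. k) p = 0" by (rule pd_eq) simp
  then show ?case by simp
next
  case (pproj c')
  show ?case
  proof (cases "c' = c")
    case True
    have h: "((\<lambda>s. (\<lambda>p. p c') (p(c := s))) has_real_derivative 1) (at (p c))"
      using True by (simp add: DERIV_ident)
    have "pd c (\<lambda>p. p c') p = 1" by (rule pd_eq[OF h])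
    then show ?thesis using h by simp
  next
    case False
    have h: "((\<lambda>s. (\<lambda>p. p c') (p(c := s))) has_real_derivative 0) (at (p c))"
      using False by simp
    have "pd c (\<lambda>p. p c') p = 0" by (rule pd_eq[OF h])
    then show ?thesis using h by simp
  qed
next
  case (padd G H)
  have h: "((\<lambda>s. (\<lambda>p. G p + H p) (p(c := s))) has_real_derivative pd c G p + pd c H p) (at (p c))"
    by (rule DERIV_add[OF padd.IH])
  have "pd c (\<lambda>p. G p + H p) p = pd c G p + pd c H p" by (rule pd_eq[OF h])
  then show ?case using h by (simp only:)
next
  case (pdiff G H)
  have h: "((\<lambda>s. (\<lambda>p. G p - H p) (p(c := s))) has_real_derivative pd c G p - pd c H p) (at (p c))"
    by (rule DERIV_diff[OF pdiff.IH])
  have "pd c (\<lambda>p. G p - H p) p = pd c G p - pd c H p" by (rule pd_eq[OF h])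
  then show ?case using h by (simp only:)
next
  case (pmult G H)
  have h: "((\<lambda>s. (\<lambda>p. G p * H p) (p(c := s))) has_real_derivative
      pd c G p * H (p(c := p c)) + pd c H p * G (p(c := p c))) (at (p c))"
    by (rule DERIV_mult[OF pmult.IH])
  have "pd c (\<lambda>p. G p * H p) p = pd c G p * H (p(c := p c)) + pd c H p * G (p(c := p c))"
    by (rule pd_eq[OF h])
  then show ?case using h by (simp only:)
qed

lemma pd_add: "poly G \<Longrightarrow> poly H \<Longrightarrow> pd c (\<lambda>p. G p + H p) p = pd c G p + pd c H p"
  by (rule pd_eq[of "\<lambda>p. G p + H p" p c, OF DERIV_add[OF poly_hasd poly_hasd]])

lemma pd_diff: "poly G \<Longrightarrow> poly H \<Longrightarrow> pd c (\<lambda>p. G p - H p) p = pd c G p - pd c H p"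
  by (rule pd_eq[of "\<lambda>p. G p - H p" p c, OF DERIV_diff[OF poly_hasd poly_hasd]])

lemma pd_mult: "poly G \<Longrightarrow> poly H \<Longrightarrow> pd c (\<lambda>p. G p * H p) p = pd c G p * H p + G p * pd c H p"
proof -
  assume a: "poly G" "poly H"
  have h: "((\<lambda>s. (\<lambda>p. G p * H p) (p(c := s))) has_real_derivative
      pd c G p * H (p(c := p c)) + pd c H p * G (p(c := p c))) (at (p c))"
    by (rule DERIV_mult[OF poly_hasd[OF a(1), of p c] poly_hasd[OF a(2), of p c]])
  have "pd c (\<lambda>p. G p * H p) p = pd c G p * H (p(c := p c)) + pd c H p * G (p(c := p c))" by (rule pd_eq[OF h])
  then show ?thesis by (simp add: mult.commute)
qed

lemma pd_proj: "pd c' (\<lambda>p. p c) p = (if c' = c then 1 else 0)"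
proof (cases "c' = c")
  case True
  have h: "((\<lambda>s. (\<lambda>p. p c) (p(c' := s))) has_real_derivative 1) (at (p c'))"
    using True by (simp add: DERIV_ident)
  show ?thesis using pd_eq[OF h] True by simp
next
  case False
  have h: "((\<lambda>s. (\<lambda>p. p c) (p(c' := s))) has_real_derivative 0) (at (p c'))"
    using False by simp
  show ?thesis using pd_eq[OF h] False by simp
qed

lemma av_const[simp]: "apply_vf X (\<lambda>p. k) q = 0"
  by (subst av_sum[of "{}"]) (auto simp: supp_def)

lemma av_proj[simp]: "apply_vf X (\<lambda>p. p c) q = X c q"
  by (subst av_sum[of "{c}"]) (auto simp: supp_def pd_proj)

lemma two_supp:
  assumes "poly G" "poly H"
  obtains S where "supp S G" "supp S H"
proof -
  obtain S1 S2 where "supp S1 G" "supp S2 H" using poly_supp assms by blast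
  then show ?thesis using that[of "S1 \<union> S2"] supp_mono
    by (metis infinite_Un supp_def sup_ge1 sup_ge2)
qed

lemma av_add[simp]: "poly G \<Longrightarrow> poly H \<Longrightarrow>
   apply_vf X (\<lambda>p. G p + H p) q = apply_vf X G q + apply_vf X H q"
proof -
  assume a: "poly G" "poly H"
  then obtain S where s: "supp S G" "supp S H" by (rule two_supp)
  have "supp S (\<lambda>p. G p + H p)" using supp_bin[OF s(1) s(2), of "(+)"] by simp
  then show ?thesis using s by (simp add: av_sum pd_add a algebra_simps sum.distrib)
qed

lemma av_diff[simp]: "poly G \<Longrightarrow> poly H \<Longrightarrow>
   apply_vf X (\<lambda>p. G p - H p) q = apply_vf X G q - apply_vf X H q"
proof -
  assume a: "poly G" "poly H"
  then obtain S where s: "supp S G" "supp S H" by (rule two_supp)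
  have "supp S (\<lambda>p. G p - H p)" using supp_bin[OF s(1) s(2), of "(-)"] by simp
  then show ?thesis using s by (simp add: av_sum pd_diff a algebra_simps sum_subtractf)
qed

lemma av_mult[simp]: "poly G \<Longrightarrow> poly H \<Longrightarrow>
   apply_vf X (\<lambda>p. G p * H p) q = apply_vf X G q * H q + G q * apply_vf X H q"
proof -
  assume a: "poly G" "poly H"
  then obtain S where s: "supp S G" "supp S H" by (rule two_supp)
  have "supp S (\<lambda>p. G p * H p)" using supp_bin[OF s(1) s(2), of "(*)"] by simp
  then show ?thesis using s
    by (simp add: av_sum pd_mult a algebra_simps sum.distrib sum_distrib_left sum_distrib_right)
qed



lemma poly_on_mono: "poly_on C G \<Longrightarrow> C \<subseteq> D \<Longrightarrow> poly_on D G"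
  by (induction rule: poly_on.induct) (auto intro: poly_on.intros)

lemma av_const_f: "apply_vf X (\<lambda>p. k) = (\<lambda>p. 0)" by (rule ext) simp
lemma av_proj_f: "apply_vf X (\<lambda>p. p c) = X c" by (rule ext) simp
lemma av_add_f: "poly G \<Longrightarrow> poly H \<Longrightarrow>
   apply_vf X (\<lambda>p. G p + H p) = (\<lambda>q. apply_vf X G q + apply_vf X H q)" by (rule ext) simp
lemma av_diff_f: "poly G \<Longrightarrow> poly H \<Longrightarrow>
   apply_vf X (\<lambda>p. G p - H p) = (\<lambda>q. apply_vf X G q - apply_vf X H q)" by (rule ext) simp
lemma av_mult_f: "poly G \<Longrightarrow> poly H \<Longrightarrow>
   apply_vf X (\<lambda>p. G p * H p) = (\<lambda>q. apply_vf X G q * H q + G q * apply_vf X H q)" by (rule ext) simp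

lemma av_poly_on: "poly_on C G \<Longrightarrow> (\<forall>c\<in>C. poly_on D (X c)) \<Longrightarrow> C \<subseteq> D \<Longrightarrow> poly_on D (apply_vf X G)"
proof (induction rule: poly_on.induct)
  case (pconst k) then show ?case by (simp add: av_const_f poly_on.pconst)
next
  case (pproj c) then show ?case by (simp add: av_proj_f)
next
  case (padd G H) then show ?case
    by (simp add: av_add_f poly_on_UNIV poly_on.padd)
next
  case (pdiff G H) then show ?case
    by (simp add: av_diff_f poly_on_UNIV poly_on.pdiff)
next
  case (pmult G H)
  have "poly_on D G" "poly_on D H" using pmult poly_on_mono by blast+
  then show ?case using pmult
    by (simp add: av_mult_f poly_on_UNIV poly_on.padd poly_on.pmult)
qed

definition nice :: "vfield \<Rightarrow> bool" where "nice X \<longleftrightarrow> (\<forall>c. poly (X c))"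

lemma av_poly: "poly G \<Longrightarrow> nice X \<Longrightarrow> poly (apply_vf X G)"
  using av_poly_on[of UNIV G UNIV X] by (simp add: nice_def)

lemma comm: "poly G \<Longrightarrow> nice X \<Longrightarrow> nice Y \<Longrightarrow>
  apply_vf X (apply_vf Y G) q - apply_vf Y (apply_vf X G) q = apply_vf (lie_bracket X Y) G q"
proof (induction arbitrary: q rule: poly_on.induct)
  case (pconst k) then show ?case by (simp add: av_const_f)
next
  case (pproj c) then show ?case by (simp add: av_proj_f lie_bracket_def)
next
  case (padd G H)
  have pG: "poly G" and pH: "poly H" using padd by auto
  have i1: "apply_vf X (apply_vf Y G) q = apply_vf Y (apply_vf X G) q + apply_vf (lie_bracket X Y) G q"
    using padd.IH(1)[of q] padd.prems by simp
  have i2: "apply_vf X (apply_vf Y H) q = apply_vf Y (apply_vf X H) q + apply_vf (lie_bracket X Y) H q"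
    using padd.IH(2)[of q] padd.prems by simp
  show ?case using padd.prems pG pH
    by (simp add: av_add_f av_poly i1 i2 algebra_simps)
next
  case (pdiff G H)
  have pG: "poly G" and pH: "poly H" using pdiff by auto
  have i1: "apply_vf X (apply_vf Y G) q = apply_vf Y (apply_vf X G) q + apply_vf (lie_bracket X Y) G q"
    using pdiff.IH(1)[of q] pdiff.prems by simp
  have i2: "apply_vf X (apply_vf Y H) q = apply_vf Y (apply_vf X H) q + apply_vf (lie_bracket X Y) H q"
    using pdiff.IH(2)[of q] pdiff.prems by simp
  show ?case using pdiff.prems pG pH
    by (simp add: av_diff_f av_poly i1 i2 algebra_simps)
next
  case (pmult G H)
  have pG: "poly G" and pH: "poly H" using pmult by auto
  have i1: "apply_vf X (apply_vf Y G) q = apply_vf Y (apply_vf X G) q + apply_vf (lie_bracket X Y) G q"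
    using pmult.IH(1)[of q] pmult.prems by simp
  have i2: "apply_vf X (apply_vf Y H) q = apply_vf Y (apply_vf X H) q + apply_vf (lie_bracket X Y) H q"
    using pmult.IH(2)[of q] pmult.prems by simp
  show ?case using pmult.prems pG pH
    by (simp add: av_mult_f av_poly pmult.hyps poly_on.pmult i1 i2 algebra_simps)
qed

lemma comm0: "poly G \<Longrightarrow> nice X \<Longrightarrow> nice Y \<Longrightarrow> (\<forall>c q. lie_bracket X Y c q = 0) \<Longrightarrow>
  apply_vf X (apply_vf Y G) = apply_vf Y (apply_vf X G)"
proof (rule ext)
  fix q assume a: "poly G" "nice X" "nice Y" "\<forall>c q. lie_bracket X Y c q = 0"
  have "apply_vf (lie_bracket X Y) G q = 0" using a(4) by (simp add: apply_vf_def)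
  then show "apply_vf X (apply_vf Y G) q = apply_vf Y (apply_vf X G) q"
    using comm[OF a(1-3), of q] by simp
qed

lemma fp_poly: "nice X \<Longrightarrow> poly G \<Longrightarrow> poly ((apply_vf X ^^ n) G)"
  by (induction n) (auto simp: av_poly)

lemma fp_poly_on: "(\<forall>c\<in>C. poly_on C (X c)) \<Longrightarrow> poly_on C G \<Longrightarrow> poly_on C ((apply_vf X ^^ n) G)"
  by (induction n) (auto intro: av_poly_on)

lemma fp_comm: "nice X \<Longrightarrow> nice Y \<Longrightarrow> (\<forall>c q. lie_bracket X Y c q = 0) \<Longrightarrow> poly G \<Longrightarrow>
  apply_vf X ((apply_vf Y ^^ n) G) = (apply_vf Y ^^ n) (apply_vf X G)"
proof (induction n)
  case 0 then show ?case by simp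
next
  case (Suc n)
  then have "apply_vf X (apply_vf Y ((apply_vf Y ^^ n) G)) = apply_vf Y (apply_vf X ((apply_vf Y ^^ n) G))"
    using comm0 fp_poly by blast
  then show ?case using Suc by simp
qed

lemma fp_diff: "nice X \<Longrightarrow> poly G \<Longrightarrow> poly H \<Longrightarrow>
  (apply_vf X ^^ n) (\<lambda>p. G p - H p) = (\<lambda>p. (apply_vf X ^^ n) G p - (apply_vf X ^^ n) H p)"
proof (induction n)
  case 0 then show ?case by simp
next
  case (Suc n)
  then show ?case by (simp add: av_diff_f fp_poly)
qed

lemma agree: "poly_on C G \<Longrightarrow> (\<forall>c\<in>C. X c = X' c) \<Longrightarrow> apply_vf X G = apply_vf X' G"
proof (induction rule: poly_on.induct)
  case (pconst k) then show ?case by (simp add: av_const_f)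
next
  case (pproj c) then show ?case by (simp add: av_proj_f)
next
  case (padd G H) then show ?case by (simp add: av_add_f poly_on_UNIV)
next
  case (pdiff G H) then show ?case by (simp add: av_diff_f poly_on_UNIV)
next
  case (pmult G H) then show ?case by (simp add: av_mult_f poly_on_UNIV)
qed

lemma br_antisym: "lie_bracket X Y c q = - lie_bracket Y X c q"
  by (simp add: lie_bracket_def)

lemma br_self: "lie_bracket X X c q = 0"
  by (simp add: lie_bracket_def)



lemma shift_comm: "shift a (shift b \<sigma>) = shift b (shift a \<sigma>)"
  unfolding shift_def by (cases "a = b") (auto simp: fun_upd_twist)

lemma nice_totD: "nice (totD a)"
  unfolding nice_def
proof
  fix c show "poly (totD a c)"
    by (cases c) (auto simp: totD_def intro: poly_on.intros)
qed

lemma nice_tDy: "nice tDy"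
  unfolding nice_def
proof
  fix c show "poly (tDy c)"
    by (cases c) (auto simp: tDy_def totD_def intro: poly_on.intros)
qed

lemma nice_tDz: "nice tDz"
  unfolding nice_def
proof
  fix c show "poly (tDz c)"
    by (cases c) (auto simp: tDz_def totD_def intro: poly_on.intros)
qed

lemma nice_tDgen: "poly R \<Longrightarrow> nice (tDgen R a)"
  unfolding nice_def
proof
  fix c assume "poly R" then show "poly (tDgen R a c)"
    by (cases c) (auto simp: tDgen_def totD_def nice_tDy nice_tDz fp_poly intro: poly_on.intros)
qed

lemma Tgen_eq: "Tgen = (\<lambda>p. (p (U (mi 0 0 1 1)) + p (V 0 0)) * p (V 0 1) - p (U (mi 0 0 0 2)) * p (V 1 0))"
  by (rule ext) (simp add: Tgen_def)
lemma Xgen_eq: "Xgen = (\<lambda>p. p (U (mi 0 0 2 0)) * p (V 0 1) - (p (U (mi 0 0 1 1)) - p (V 0 0)) * p (V 1 0))"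
  by (rule ext) (simp add: Xgen_def)
lemma heavenly_eq: "heavenly = (\<lambda>p. p (U (mi 0 1 0 1)) - p (U (mi 1 0 1 0))
      - p (U (mi 0 0 2 0)) * p (U (mi 0 0 0 2)) + p (U (mi 0 0 1 1)) * p (U (mi 0 0 1 1)))"
  by (rule ext) (simp add: heavenly_def power2_eq_square)

lemma poly_Tgen: "poly Tgen" unfolding Tgen_eq by (intro poly_on.intros) simp_all
lemma poly_Xgen: "poly Xgen" unfolding Xgen_eq by (intro poly_on.intros) simp_all

definition NV :: "coord set" where "NV = {c. \<forall>i j. c \<noteq> V i j}"

lemma poly_heavenly: "poly_on NV heavenly"
  unfolding heavenly_eq by (intro poly_on.intros) (simp_all add: NV_def)

lemma totD_NV: "\<forall>c\<in>NV. poly_on NV (totD a c)"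
proof
  fix c assume "c \<in> NV" then show "poly_on NV (totD a c)"
    by (cases c) (auto simp: totD_def NV_def intro: poly_on.intros)
qed

lemma Dsig_NV: "poly_on NV (Dsig \<sigma> heavenly)"
  unfolding Dsig_def by (intro fp_poly_on totD_NV poly_heavenly)

lemma poly_Dsig: "poly (Dsig \<sigma> heavenly)" using Dsig_NV poly_on_UNIV by blast

lemma br_nonV:
  assumes "\<And>v. X (Base v) = totD a (Base v)" "\<And>\<sigma>. X (U \<sigma>) = totD a (U \<sigma>)"
    "\<And>v. Y (Base v) = totD b (Base v)" "\<And>\<sigma>. Y (U \<sigma>) = totD b (U \<sigma>)"
  shows "lie_bracket X Y (Base v) q = 0" "lie_bracket X Y (U \<sigma>) q = 0"
proof -
  show "lie_bracket X Y (Base v) q = 0"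
    by (simp add: lie_bracket_def assms totD_def)
  show "lie_bracket X Y (U \<sigma>) q = 0"
    by (simp add: lie_bracket_def assms totD_def shift_comm)
qed

lemma br_tot: "lie_bracket (totD a) (totD b) c q = 0"
  by (cases c) (auto intro: br_nonV simp: lie_bracket_def totD_def shift_comm)

lemma tDy_nonV[simp]: "tDy (Base v) = totD Vy (Base v)" "tDy (U \<sigma>) = totD Vy (U \<sigma>)"
  by (simp_all add: tDy_def)
lemma tDz_nonV[simp]: "tDz (Base v) = totD Vz (Base v)" "tDz (U \<sigma>) = totD Vz (U \<sigma>)"
  by (simp_all add: tDz_def)
lemma tDgen_nonV[simp]: "tDgen R a (Base v) = totD a (Base v)" "tDgen R a (U \<sigma>) = totD a (U \<sigma>)"
  by (simp_all add: tDgen_def)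
lemma tDgen_V[simp]: "tDgen R a (V i j) = (apply_vf tDy ^^ i) ((apply_vf tDz ^^ j) R)"
  by (simp add: tDgen_def)
lemma tD_simps[simp]: "tD Vt = tDgen Tgen Vt" "tD Vx = tDgen Xgen Vx" "tD Vy = tDy" "tD Vz = tDz"
  by (simp_all add: tD_def)

lemma yz0: "lie_bracket tDy tDz c q = 0"
proof (cases c)
  case (Base v) then show ?thesis using br_nonV(1)[of tDy Vy tDz Vz] by simp
next
  case (U \<sigma>) then show ?thesis using br_nonV(2)[of tDy Vy tDz Vz] by simp
next
  case (V i j) then show ?thesis by (simp add: lie_bracket_def tDy_def tDz_def)
qed

lemma zy0: "lie_bracket tDz tDy c q = 0"
  using yz0 br_antisym by (metis neg_0_equal_iff_equal)

lemma genY: "poly R \<Longrightarrow> lie_bracket (tDgen R a) tDy c q = 0"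
proof (cases c)
  case (Base v) then show ?thesis using br_nonV(1)[of "tDgen R a" a tDy Vy] by simp
next
  case (U \<sigma>) then show ?thesis using br_nonV(2)[of "tDgen R a" a tDy Vy] by simp
next
  case (V i j) then show ?thesis by (simp add: lie_bracket_def tDy_def)
qed

lemma genZ: "poly R \<Longrightarrow> lie_bracket (tDgen R a) tDz c q = 0"
proof (cases c)
  case (Base v) then show ?thesis using br_nonV(1)[of "tDgen R a" a tDz Vz] by simp
next
  case (U \<sigma>) then show ?thesis using br_nonV(2)[of "tDgen R a" a tDz Vz] by simp
next
  case (V i j)
  assume R: "poly R"
  have "apply_vf tDz ((apply_vf tDy ^^ i) ((apply_vf tDz ^^ j) R))
      = (apply_vf tDy ^^ i) (apply_vf tDz ((apply_vf tDz ^^ j) R))"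
    by (rule fp_comm) (auto simp: nice_tDy nice_tDz zy0 fp_poly R)
  then show ?thesis using V by (simp add: lie_bracket_def tDz_def)
qed



lemma comm_tot: "poly G \<Longrightarrow> apply_vf (totD a) ((apply_vf (totD b) ^^ n) G) = (apply_vf (totD b) ^^ n) (apply_vf (totD a) G)"
  by (rule fp_comm) (auto simp: nice_totD br_tot)

lemma fpt_poly: "poly G \<Longrightarrow> poly ((apply_vf (totD b) ^^ n) G)"
  by (rule fp_poly) (simp_all add: nice_totD)

lemma polyE: "poly heavenly" using poly_heavenly poly_on_UNIV by blast

lemma Dsig_shift: "apply_vf (totD a) (Dsig \<sigma> heavenly) = Dsig (shift a \<sigma>) heavenly"
proof -
  define Tt where "Tt = apply_vf (totD Vt)"
  define Tx where "Tx = apply_vf (totD Vx)"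
  define Ty where "Ty = apply_vf (totD Vy)"
  define Tz where "Tz = apply_vf (totD Vz)"
  define A where "A = apply_vf (totD a)"
  have pE: "poly heavenly" by (rule polyE)
  have c: "\<And>G b n. poly G \<Longrightarrow> A ((apply_vf (totD b) ^^ n) G) = (apply_vf (totD b) ^^ n) (A G)"
    unfolding A_def by (rule comm_tot)
  have p: "\<And>G b n. poly G \<Longrightarrow> poly ((apply_vf (totD b) ^^ n) G)" by (rule fpt_poly)
  have "A (Dsig \<sigma> heavenly) = (Tt ^^ \<sigma> Vt) ((Tx ^^ \<sigma> Vx) ((Ty ^^ \<sigma> Vy) ((Tz ^^ \<sigma> Vz) (A heavenly))))"
    unfolding Dsig_def Tt_def Tx_def Ty_def Tz_def
    by (simp add: c p pE)
  also have "\<dots> = Dsig (shift a \<sigma>) heavenly"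
  proof (cases a)
    case Vt then show ?thesis unfolding Dsig_def Tt_def Tx_def Ty_def Tz_def A_def shift_def
      by (simp add: c p pE comm_tot fpt_poly funpow_swap1)
  next
    case Vx then show ?thesis unfolding Dsig_def Tt_def Tx_def Ty_def Tz_def A_def shift_def
      by (simp add: c p pE comm_tot fpt_poly funpow_swap1)
  next
    case Vy then show ?thesis unfolding Dsig_def Tt_def Tx_def Ty_def Tz_def A_def shift_def
      by (simp add: c p pE comm_tot fpt_poly funpow_swap1)
  next
    case Vz then show ?thesis unfolding Dsig_def Tt_def Tx_def Ty_def Tz_def A_def shift_def
      by (simp add: c p pE comm_tot fpt_poly funpow_swap1)
  qed
  finally show ?thesis unfolding A_def .
qed


lemma agreeY: "apply_vf tDy (Dsig \<sigma> heavenly) = apply_vf (totD Vy) (Dsig \<sigma> heavenly)"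
  by (rule agree[OF Dsig_NV]) (auto simp: NV_def tDy_def split: coord.split)
lemma agreeZ: "apply_vf tDz (Dsig \<sigma> heavenly) = apply_vf (totD Vz) (Dsig \<sigma> heavenly)"
  by (rule agree[OF Dsig_NV]) (auto simp: NV_def tDz_def split: coord.split)

inductive inI :: "fn \<Rightarrow> bool" where
  iE: "inI (Dsig \<sigma> heavenly)"
| iM: "poly H \<Longrightarrow> inI G \<Longrightarrow> inI (\<lambda>p. H p * G p)"
| iA: "inI G \<Longrightarrow> inI H \<Longrightarrow> inI (\<lambda>p. G p + H p)"

lemma inI_poly: "inI G \<Longrightarrow> poly G"
  by (induction rule: inI.induct) (auto intro: poly_on.intros poly_Dsig)

lemma inI_zero: "inI G \<Longrightarrow> p \<in> Einf \<Longrightarrow> G p = 0"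
  by (induction rule: inI.induct) (auto simp: Einf_def)

lemma inI_W: assumes W: "nice W" and D: "\<And>\<sigma>. \<exists>\<sigma>'. apply_vf W (Dsig \<sigma> heavenly) = Dsig \<sigma>' heavenly"
  shows "inI G \<Longrightarrow> inI (apply_vf W G)"
proof (induction rule: inI.induct)
  case (iE \<sigma>) then show ?case using D[of \<sigma>] by (metis inI.iE)
next
  case (iM H G)
  have pG: "poly G" using iM inI_poly by blast
  have "apply_vf W (\<lambda>p. H p * G p) = (\<lambda>q. apply_vf W H q * G q + H q * apply_vf W G q)"
    by (rule av_mult_f[OF iM(1) pG])
  moreover have "inI (\<lambda>q. apply_vf W H q * G q + H q * apply_vf W G q)"
    by (intro inI.iA inI.iM av_poly W iM)
  ultimately show ?case by simp
next
  case (iA G H)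
  have "apply_vf W (\<lambda>p. G p + H p) = (\<lambda>q. apply_vf W G q + apply_vf W H q)"
    by (rule av_add_f) (use iA inI_poly in blast)+
  then show ?case using iA by (simp add: inI.iA)
qed

lemma inI_Y: "inI G \<Longrightarrow> inI (apply_vf tDy G)"
  by (rule inI_W[OF nice_tDy]) (auto simp: agreeY Dsig_shift)
lemma inI_Z: "inI G \<Longrightarrow> inI (apply_vf tDz G)"
  by (rule inI_W[OF nice_tDz]) (auto simp: agreeZ Dsig_shift)

lemma inI_fp: "inI G \<Longrightarrow> inI ((apply_vf tDy ^^ i) ((apply_vf tDz ^^ j) G))"
proof -
  assume "inI G"
  then have "inI ((apply_vf tDz ^^ j) G)" by (induction j) (auto intro: inI_Z)
  then show ?thesis by (induction i) (auto intro: inI_Y)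
qed



lemma mi_apply: "mi a b c d Vt = a" "mi a b c d Vx = b" "mi a b c d Vy = c" "mi a b c d Vz = d"
  by (simp_all add: mi_def)

lemma shift_mi: "shift Vt (mi a b c d) = mi (a+1) b c d" "shift Vx (mi a b c d) = mi a (b+1) c d"
   "shift Vy (mi a b c d) = mi a b (c+1) d" "shift Vz (mi a b c d) = mi a b c (d+1)"
  by (auto simp: shift_def mi_def fun_eq_iff split: var.split)

lemma fp1: "((f::'a \<Rightarrow> 'a) ^^ 1) = f" by simp

lemma sucs: "Suc 0 = 1" "Suc 1 = 2" "Suc 2 = 3" by simp_all

lemma K_eq: "(\<lambda>p. apply_vf (tD Vt) Xgen p - apply_vf (tD Vx) Tgen p) =
   (\<lambda>p. p (V 1 0) * Dsig (mi 0 0 0 1) heavenly p + (-1 * p (V 0 1)) * Dsig (mi 0 0 1 0) heavenly p)"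
proof (rule ext)
  fix p
  show "apply_vf (tD Vt) Xgen p - apply_vf (tD Vx) Tgen p =
     p (V 1 0) * Dsig (mi 0 0 0 1) heavenly p + (-1 * p (V 0 1)) * Dsig (mi 0 0 1 0) heavenly p"
    apply (simp add: mi_apply shift_mi Dsig_def Tgen_eq Xgen_eq heavenly_eq fp1 poly_on.intros totD_def tDy_def tDz_def)
    apply (simp only: sucs)
    apply (simp add: algebra_simps)
    done
qed


lemma inI_K: "inI (\<lambda>p. apply_vf (tD Vt) Xgen p - apply_vf (tD Vx) Tgen p)"
  unfolding K_eq by (intro inI.intros poly_on.intros) simp_all

lemma mainV: "p \<in> Einf \<Longrightarrow> lie_bracket (tD Vt) (tD Vx) (V i j) p = 0"
proof -
  assume p: "p \<in> Einf"
  define Y where "Y = apply_vf tDy"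
  define Z where "Z = apply_vf tDz"
  have nT: "nice (tDgen Tgen Vt)" and nX: "nice (tDgen Xgen Vx)"
    by (simp_all add: nice_tDgen poly_Tgen poly_Xgen)
  have cm: "apply_vf (tDgen R a) ((Y ^^ i) ((Z ^^ j) G)) = (Y ^^ i) ((Z ^^ j) (apply_vf (tDgen R a) G))"
    if R: "poly R" and G: "poly G" for R a G
  proof -
    have "apply_vf (tDgen R a) ((Y ^^ i) ((Z ^^ j) G)) = (Y ^^ i) (apply_vf (tDgen R a) ((Z ^^ j) G))"
      unfolding Y_def Z_def
      by (rule fp_comm) (auto simp: nice_tDgen nice_tDy nice_tDz R G fp_poly genY)
    also have "apply_vf (tDgen R a) ((Z ^^ j) G) = (Z ^^ j) (apply_vf (tDgen R a) G)"
      unfolding Z_def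
      by (rule fp_comm) (auto simp: nice_tDgen nice_tDz R G genZ)
    finally show ?thesis .
  qed
  have "lie_bracket (tD Vt) (tD Vx) (V i j) p =
     (Y ^^ i) ((Z ^^ j) (apply_vf (tD Vt) Xgen)) p - (Y ^^ i) ((Z ^^ j) (apply_vf (tD Vx) Tgen)) p"
    by (simp add: lie_bracket_def cm[OF poly_Tgen poly_Xgen] cm[OF poly_Xgen poly_Tgen] flip: Y_def Z_def)
  also have "\<dots> = (Y ^^ i) ((Z ^^ j) (\<lambda>p. apply_vf (tD Vt) Xgen p - apply_vf (tD Vx) Tgen p)) p"
  proof -
    have a1: "poly (apply_vf (tDgen Tgen Vt) Xgen)" "poly (apply_vf (tDgen Xgen Vx) Tgen)"
      using av_poly nT nX poly_Tgen poly_Xgen by auto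
    have a2: "poly ((Z ^^ j) (apply_vf (tDgen Tgen Vt) Xgen))" "poly ((Z ^^ j) (apply_vf (tDgen Xgen Vx) Tgen))"
      unfolding Z_def using a1 fp_poly nice_tDz by auto
    show ?thesis
      by (simp add: Z_def[symmetric] Y_def[symmetric] fp_diff[OF nice_tDz a1, folded Z_def]
          fp_diff[OF nice_tDy a2, folded Y_def])
  qed
  also have "\<dots> = 0" unfolding Y_def Z_def
    by (rule inI_zero[OF inI_fp[OF inI_K] p])
  finally show ?thesis .
qed

lemma brY: "lie_bracket (tD a) tDy c q = 0"
  by (cases a) (auto simp: genY poly_Tgen poly_Xgen br_self zy0)

lemma brZ: "lie_bracket (tD a) tDz c q = 0"
  by (cases a) (auto simp: genZ poly_Tgen poly_Xgen br_self yz0)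

theorem mainTheorem1:
  shows "\<forall>a b c. \<forall>p\<in>Einf. lie_bracket (tD a) (tD b) c p = 0"
proof (intro allI ballI)
  fix a b c p assume p: "p \<in> Einf"
  show "lie_bracket (tD a) (tD b) c p = 0"
  proof (cases c)
    case (Base v) then show ?thesis
      by (cases a; cases b) (auto intro!: br_nonV(1) simp: tD_def tDy_def tDz_def)
  next
    case (U \<sigma>) then show ?thesis
      by (cases a; cases b) (auto intro!: br_nonV(2) simp: tD_def tDy_def tDz_def)
  next
    case (V i j)
    show ?thesis
    proof (cases b)
      case Vy then show ?thesis using brY by simp
    next
      case Vz then show ?thesis using brZ by simp
    next
      case Vt
      show ?thesis
      proof (cases a)
        case Vt then show ?thesis using \<open>b = Vt\<close> br_self by simp
      next
        case Vx then show ?thesis using \<open>b = Vt\<close> V mainV[OF p] br_antisym by (metis neg_0_equal_iff_equal)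
      next
        case Vy then show ?thesis using br_antisym brY by (metis neg_0_equal_iff_equal tD_simps(3))
      next
        case Vz then show ?thesis using br_antisym brZ by (metis neg_0_equal_iff_equal tD_simps(4))
      qed
    next
      case Vx
      show ?thesis
      proof (cases a)
        case Vx then show ?thesis using \<open>b = Vx\<close> br_self by simp
      next
        case Vt then show ?thesis using \<open>b = Vx\<close> V mainV[OF p] by simp
      next
        case Vy then show ?thesis using br_antisym brY by (metis neg_0_equal_iff_equal tD_simps(3))
      next
        case Vz then show ?thesis using br_antisym brZ by (metis neg_0_equal_iff_equal tD_simps(4))
      qed
    qed
  qed
qed


end
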